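(* Let $h$ be a non-degenerate symmetric $(0,2)$-tensor field and $J_1,J_2$ $h$-symmetric $(1,1)$-tensor fields on a smooth manifold $M$ such that $J_i^2=-(\lambda_i+1)I$ for real numbers $\lambda_1,\lambda_2$, and $J_1J_2+J_2J_1=-(\lambda_1+\lambda_2)I$. Define $\hat J_i(X+\eta)=J_iX+\lambda_ih^{-1}(\eta)+h(X)-J_i^*\eta$, $i=1,2$, on $TM\oplus T^*M$. Then $(\hat J_1,\hat J_2,\hat J_1\hat J_2)$ is a generalized almost quaternionic structure on $M$, i.e. $\hat J_1^2=\hat J_2^2=-I$ and $\hat J_1\hat J_2=-\hat J_2\hat J_1$.
   Context: $h$ is viewed as the isomorphism $TM\to T^*M$, $X\mapsto h(X,\cdot)$, with inverse $h^{-1}$; $(J^*\eta)(X)=\eta(JX)$; $J$ is $h$-symmetric if $h(JX,Y)=h(X,JY)$. *)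

theory Defs
  imports "HOL-Analysis.Analysis"
begin

text \<open>Pointwise (fibrewise) model: 'v is a tangent space T_pM (finite-dimensional real
vector space), covectors are linear functionals 'v \<Rightarrow> real, and TM \<oplus> T*M is
modelled by pairs (X, eta).\<close>

definition flat :: "('v \<Rightarrow> 'v \<Rightarrow> real) \<Rightarrow> 'v \<Rightarrow> ('v \<Rightarrow> real)" where
  "flat h X = (\<lambda>Y. h X Y)"

definition sharp :: "('v \<Rightarrow> 'v \<Rightarrow> real) \<Rightarrow> ('v \<Rightarrow> real) \<Rightarrow> 'v" where
  "sharp h eta = (THE X. flat h X = eta)"

definition dual_map :: "('v \<Rightarrow> 'v) \<Rightarrow> ('v \<Rightarrow> real) \<Rightarrow> ('v \<Rightarrow> real)" where
  "dual_map J eta = (\<lambda>Y. eta (J Y))"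

definition nondegenerate :: "('v::real_vector \<Rightarrow> 'v \<Rightarrow> real) \<Rightarrow> bool" where
  "nondegenerate h \<longleftrightarrow> (\<forall>X. (\<forall>Y. h X Y = 0) \<longrightarrow> X = 0)"

definition h_symmetric :: "('v \<Rightarrow> 'v \<Rightarrow> real) \<Rightarrow> ('v \<Rightarrow> 'v) \<Rightarrow> bool" where
  "h_symmetric h J \<longleftrightarrow> (\<forall>X Y. h (J X) Y = h X (J Y))"

definition gen_J :: "('v::real_vector \<Rightarrow> 'v \<Rightarrow> real) \<Rightarrow> ('v \<Rightarrow> 'v) \<Rightarrow> real
    \<Rightarrow> 'v \<times> ('v \<Rightarrow> real) \<Rightarrow> 'v \<times> ('v \<Rightarrow> real)" where
  "gen_J h J lam p = (J (fst p) + lam *\<^sub>R sharp h (snd p),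
                      (\<lambda>Y. flat h (fst p) Y - dual_map J (snd p) Y))"

end

theory Submission
  imports Defs
begin

lemma lin_repr:
  fixes f :: "'v::euclidean_space \<Rightarrow> real"
  assumes "linear f"
  shows "f Y = (\<Sum>b\<in>Basis. f b *\<^sub>R b) \<bullet> Y"
proof -
  have "f Y = f (\<Sum>b\<in>Basis. (Y \<bullet> b) *\<^sub>R b)" by (simp add: euclidean_representation)
  also have "\<dots> = (\<Sum>b\<in>Basis. (Y \<bullet> b) * f b)"
    using assms by (simp add: linear_sum linear_scale)
  also have "\<dots> = (\<Sum>b\<in>Basis. f b *\<^sub>R b) \<bullet> Y"
    by (simp add: inner_sum_left inner_commute[of Y] mult.commute)
  finally show ?thesis .
qed

lemma flat_surj:
  fixes h :: "'v::euclidean_space \<Rightarrow> 'v \<Rightarrow> real"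
  assumes "bilinear h" "nondegenerate h" "linear eta"
  shows "\<exists>X. \<forall>Y. h X Y = eta Y"
proof -
  define F where "F X = (\<Sum>b\<in>Basis. h X b *\<^sub>R b)" for X
  have hF: "h X Y = F X \<bullet> Y" for X Y
    unfolding F_def by (rule lin_repr) (use assms(1) in \<open>simp add: bilinear_def\<close>)
  have linF: "linear F"
  proof
    fix x y :: 'v and c :: real
    show "F (x + y) = F x + F y" unfolding F_def
      by (simp add: bilinear_ladd[OF assms(1)] scaleR_add_left sum.distrib)
    show "F (c *\<^sub>R x) = c *\<^sub>R F x" unfolding F_def
      by (simp add: bilinear_lmul[OF assms(1)] scaleR_sum_right)
  qed
  have "inj F"
  proof (rule linear_injective_0[THEN iffD2, OF linF], intro allI impI)
    fix x assume "F x = 0"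
    then have "\<forall>Y. h x Y = 0" by (simp add: hF)
    then show "x = 0" using assms(2) unfolding nondegenerate_def by blast
  qed
  then have "surj F" using linF linear_injective_imp_surjective by blast
  then obtain X where "F X = (\<Sum>b\<in>Basis. eta b *\<^sub>R b)" by (metis surjD)
  then show ?thesis using hF lin_repr[OF assms(3)] by metis
qed

lemma sharp_eq:
  fixes h :: "'v::euclidean_space \<Rightarrow> 'v \<Rightarrow> real"
  assumes "bilinear h" "nondegenerate h" "\<And>Y. h X Y = eta Y"
  shows "sharp h eta = X"
proof -
  have u: "Z = X" if "flat h Z = eta" for Z
  proof -
    have "\<forall>Y. h (Z - X) Y = 0" using that assms(3)
      by (simp add: bilinear_lsub[OF assms(1)] flat_def fun_eq_iff)
    then show ?thesis using assms(2) unfolding nondegenerate_def by auto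
  qed
  have "flat h X = eta" using assms(3) by (simp add: flat_def fun_eq_iff)
  then show ?thesis unfolding sharp_def using u by (rule the_equality)
qed

lemma sharp_prop:
  fixes h :: "'v::euclidean_space \<Rightarrow> 'v \<Rightarrow> real"
  assumes "bilinear h" "nondegenerate h" "linear eta"
  shows "h (sharp h eta) Y = eta Y"
proof -
  obtain X where X: "\<And>Y. h X Y = eta Y" using flat_surj[OF assms] by blast
  then show ?thesis using sharp_eq[OF assms(1,2) X] X by simp
qed



theorem proposition3p13:
  fixes h :: "'v::euclidean_space \<Rightarrow> 'v \<Rightarrow> real"
    and J1 J2 :: "'v \<Rightarrow> 'v"
    and lam1 lam2 :: real
  assumes "bilinear h"
    and "\<And>X Y. h X Y = h Y X"
    and "nondegenerate h"
    and "linear J1" and "linear J2"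
    and "h_symmetric h J1" and "h_symmetric h J2"
    and "\<And>X. J1 (J1 X) = - (lam1 + 1) *\<^sub>R X"
    and "\<And>X. J2 (J2 X) = - (lam2 + 1) *\<^sub>R X"
    and "\<And>X. J1 (J2 X) + J2 (J1 X) = - (lam1 + lam2) *\<^sub>R X"
  shows "\<forall>X eta. linear eta \<longrightarrow>
           gen_J h J1 lam1 (gen_J h J1 lam1 (X, eta)) = (- X, \<lambda>Y. - eta Y)
         \<and> gen_J h J2 lam2 (gen_J h J2 lam2 (X, eta)) = (- X, \<lambda>Y. - eta Y)
         \<and> gen_J h J1 lam1 (gen_J h J2 lam2 (X, eta))
             = (- fst (gen_J h J2 lam2 (gen_J h J1 lam1 (X, eta))),
                \<lambda>Y. - snd (gen_J h J2 lam2 (gen_J h J1 lam1 (X, eta))) Y)"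
proof (intro allI impI)
  fix X :: 'v and eta :: "'v \<Rightarrow> real"
  assume le: "linear eta"
  note B = assms(1) and N = assms(3)
  define s where "s = sharp h eta"
  have S: "h s Y = eta Y" for Y unfolding s_def by (rule sharp_prop[OF B N le])
  have hs1: "h (J1 a) b = h a (J1 b)" for a b using assms(6) unfolding h_symmetric_def by blast
  have hs2: "h (J2 a) b = h a (J2 b)" for a b using assms(7) unfolding h_symmetric_def by blast
  have S1: "sharp h (\<lambda>Y. flat h X Y - dual_map J1 eta Y) = X - J1 s"
    by (rule sharp_eq[OF B N]) (simp add: bilinear_lsub[OF B] hs1 S flat_def dual_map_def)
  have S2: "sharp h (\<lambda>Y. flat h X Y - dual_map J2 eta Y) = X - J2 s"
    by (rule sharp_eq[OF B N]) (simp add: bilinear_lsub[OF B] hs2 S flat_def dual_map_def)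
  have L1: "J1 (a + b) = J1 a + J1 b" "J1 (c *\<^sub>R a) = c *\<^sub>R J1 a" "J1 (a - b) = J1 a - J1 b" for a b c
    using assms(4) by (simp_all add: linear_add linear_scale linear_diff)
  have L2: "J2 (a + b) = J2 a + J2 b" "J2 (c *\<^sub>R a) = c *\<^sub>R J2 a" "J2 (a - b) = J2 a - J2 b" for a b c
    using assms(5) by (simp_all add: linear_add linear_scale linear_diff)
  have E: "eta (a + b) = eta a + eta b" "eta (c *\<^sub>R a) = c * eta a"
    "eta (a - b) = eta a - eta b" "eta (- a) = - eta a" for a b c
    using le by (simp_all add: linear_add linear_scale linear_diff linear_neg)
  have HL: "h (a + b) Y = h a Y + h b Y" "h (c *\<^sub>R a) Y = c * h a Y" for a b c Y
    using B by (simp_all add: bilinear_ladd bilinear_lmul)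
  have c1: "J2 (J1 Y) = - (lam1 + lam2) *\<^sub>R Y - J1 (J2 Y)" for Y
    using assms(10)[of Y] by (simp add: algebra_simps)
  show "gen_J h J1 lam1 (gen_J h J1 lam1 (X, eta)) = (- X, \<lambda>Y. - eta Y)
         \<and> gen_J h J2 lam2 (gen_J h J2 lam2 (X, eta)) = (- X, \<lambda>Y. - eta Y)
         \<and> gen_J h J1 lam1 (gen_J h J2 lam2 (X, eta))
             = (- fst (gen_J h J2 lam2 (gen_J h J1 lam1 (X, eta))),
                \<lambda>Y. - snd (gen_J h J2 lam2 (gen_J h J1 lam1 (X, eta))) Y)"
    unfolding gen_J_def fst_conv snd_conv s_def[symmetric] S1 S2
    by (auto simp: fun_eq_iff L1 L2 E HL S hs1 hs2 assms(8,9) c1 flat_def dual_map_def algebra_simps)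
qed

end
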